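(* (i) Let $\mathcal A$ be a finite set of matrices in $GL_2(\mathbb R)$ and let $\Phi$ be the IFS induced by $\mathcal A$ on $\mathbb{RP}^1$. If $\Phi$ satisfies the strong exponential separation condition on a nonempty set, then $\mathcal A$ is strongly Diophantine. (ii) Let $\mathcal A$ be a finite set of matrices in $SL_2(\mathbb R)$ and let $\Phi$ be the IFS induced by $\mathcal A$ on $\mathbb{RP}^1$. Then $\Phi$ satisfies the strong exponential separation condition on some set containing at least three points if and only if $\mathcal A$ is strongly Diophantine.
   Context: $\mathbb{RP}^1$ is identified with $\mathbb R/\pi\mathbb Z$ with its induced metric $d_{\mathbb P}$; $\varphi_A$ is the induced action of $A$. Write $\mathcal A=\{A_i\}_{i\in\Lambda}$, $A_{\mathbf i}=A_{i_1}\cdots A_{i_n}$, $\varphi_{\mathbf i}=\varphi_{A_{i_1}}\circ\cdots\circ\varphi_{A_{i_n}}$. $\Phi$ satisfies the strong exponential separation condition on $J$ if $\varphi_{\mathbf i}\equiv\varphi_{\mathbf j}$ only when $\mathbf i=\mathbf j$, and there is $c>0$ such that for all $n$ and $\mathbf i,\mathbf j\in\Lambda^n$ with $i_1\ne j_1$, $\sup_{x\in J}d_{\mathbb P}(\varphi_{\mathbf i}(x),\varphi_{\mathbf j}(x))>c^n$. $\mathcal A$ is strongly Diophantine if there is $c>0$ such that $\|A_{\mathbf i}-A_{\mathbf j}\|>c^n$ (operator norm) for all $n$ and $\mathbf i\ne\mathbf j\in\Lambda^n$. *)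

theory Defs
  imports "HOL-Analysis.Analysis"
begin

text \<open>RP^1 is identified with R / pi Z; points are represented by reals,
  canonically by representatives in [0, pi).\<close>

definition modpi :: "real \<Rightarrow> real" where
  "modpi t = t - pi * of_int \<lfloor>t / pi\<rfloor>"

definition dP :: "real \<Rightarrow> real \<Rightarrow> real" where
  "dP x y = min (modpi (x - y)) (pi - modpi (x - y))"

definition dirvec :: "real \<Rightarrow> real ^ 2" where
  "dirvec x = (\<chi> i. if i = 1 then cos x else sin x)"

definition phiA :: "real ^ 2 ^ 2 \<Rightarrow> real \<Rightarrow> real" where
  "phiA A x = (let v = A *v dirvec x in modpi (Arg (Complex (v $ 1) (v $ 2))))"

definition words :: "'a set \<Rightarrow> nat \<Rightarrow> 'a list set" where
  "words L n = {w. length w = n \<and> set w \<subseteq> L}"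

definition matw :: "(real ^ 2 ^ 2) list \<Rightarrow> real ^ 2 ^ 2" where
  "matw w = foldr (\<lambda>A B. A ** B) w (mat 1)"

definition phiw :: "(real ^ 2 ^ 2) list \<Rightarrow> real \<Rightarrow> real" where
  "phiw w = foldr (\<lambda>A f. phiA A \<circ> f) w id"

definition strong_exp_sep :: "(real ^ 2 ^ 2) set \<Rightarrow> real set \<Rightarrow> bool" where
  "strong_exp_sep \<A> J \<longleftrightarrow>
     (\<forall>n. \<forall>i\<in>words \<A> n. \<forall>j\<in>words \<A> n. phiw i = phiw j \<longrightarrow> i = j) \<and>
     (\<exists>c>0. \<forall>n. \<forall>i\<in>words \<A> n. \<forall>j\<in>words \<A> n. n \<ge> 1 \<longrightarrow> hd i \<noteq> hd j \<longrightarrow>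
        (SUP x\<in>J. dP (phiw i x) (phiw j x)) > c ^ n)"

definition strongly_diophantine :: "(real ^ 2 ^ 2) set \<Rightarrow> bool" where
  "strongly_diophantine \<A> \<longleftrightarrow>
     (\<exists>c>0. \<forall>n. \<forall>i\<in>words \<A> n. \<forall>j\<in>words \<A> n. i \<noteq> j \<longrightarrow>
        onorm (\<lambda>v. (matw i - matw j) *v v) > c ^ n)"

end

theory Submission
  imports Defs
begin


definition cr :: "real^2 \<Rightarrow> real^2 \<Rightarrow> real" where
  "cr p q = p$1 * q$2 - p$2 * q$1"

lemma norm2_sq: "norm (x::real^2) ^ 2 = x$1^2 + x$2^2"
  unfolding power2_norm_eq_inner by (simp add: inner_vec_def sum_2 power2_eq_square)

lemma cr_le: "\<bar>cr p q\<bar> \<le> norm p * norm q"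
proof -
  have "(cr p q)^2 \<le> (norm p * norm q)^2"
  proof -
    have "(norm p * norm q)^2 = (cr p q)^2 + (p$1*q$1 + p$2*q$2)^2"
      unfolding power_mult_distrib norm2_sq cr_def by (simp add: algebra_simps power2_eq_square)
    thus ?thesis by simp
  qed
  hence "\<bar>cr p q\<bar>^2 \<le> (norm p * norm q)^2" by simp
  thus ?thesis by (rule power2_le_imp_le) simp
qed

lemma modpi_ex: "\<exists>k::int. modpi t = t - pi * of_int k" by (auto simp: modpi_def)

lemma modpi_bounds: "0 \<le> modpi t" "modpi t < pi"
proof -
  have "of_int \<lfloor>t/pi\<rfloor> \<le> t/pi" "t/pi < of_int \<lfloor>t/pi\<rfloor> + 1" by linarith+
  then have "pi * of_int \<lfloor>t/pi\<rfloor> \<le> t" "t < pi * (of_int \<lfloor>t/pi\<rfloor> + 1)"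
    using pi_gt_zero by (metis mult.commute pos_le_divide_eq, metis mult.commute pos_divide_less_eq)
  then show "0 \<le> modpi t" "modpi t < pi" unfolding modpi_def
    by (auto simp: algebra_simps)
qed

lemma cos_pi_int_sq: "(cos (pi * of_int k))^2 = 1"
  using sin_cos_squared_add[of "pi * of_int k"] by simp

lemma dirvec_modpi: "\<exists>s. s^2 = 1 \<and> dirvec (modpi t) = s *\<^sub>R dirvec t"
proof -
  obtain k where k: "modpi t = t - pi * of_int k" using modpi_ex by blast
  show ?thesis
    apply (rule exI[of _ "cos (pi * of_int k)"])
    apply (simp add: cos_pi_int_sq k dirvec_def cos_diff sin_diff vec_eq_iff forall_2)
    done
qed

lemma norm_dirvec: "norm (dirvec t) = 1"
proof -
  have "norm (dirvec t) ^2 = 1" by (simp add: norm2_sq dirvec_def)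
  thus ?thesis using power2_eq_1_iff[of "norm (dirvec t)"] norm_ge_zero[of "dirvec t"] by auto
qed

lemma cr_scale: "cr (a *\<^sub>R p) (b *\<^sub>R q) = a * b * cr p q"
  by (simp add: cr_def algebra_simps)

lemma cr_swap: "cr q p = - cr p q" by (simp add: cr_def)

lemma cr_diff: "cr (p - q) q = cr p q" by (simp add: cr_def algebra_simps)

lemma sin_cr: "sin (a - b) = cr (dirvec b) (dirvec a)"
  by (simp add: cr_def dirvec_def sin_diff algebra_simps)

lemma dirvec_Arg:
  fixes w :: "real^2"
  assumes "w \<noteq> 0"
  shows "\<exists>s. s \<noteq> 0 \<and> dirvec (Arg (Complex (w$1) (w$2))) = s *\<^sub>R w"
proof -
  define z where "z = Complex (w$1) (w$2)"
  have z0: "z \<noteq> 0" using assms by (auto simp: z_def vec_eq_iff forall_2 complex_eq_iff)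
  have r: "rcis (cmod z) (Arg z) = z" by (rule rcis_cmod_Arg)
  have c: "w$1 = cmod z * cos (Arg z)" "w$2 = cmod z * sin (Arg z)"
    using arg_cong[OF r, of Re] arg_cong[OF r, of Im] by (simp_all add: z_def)
  have "cmod z > 0" using z0 by simp
  then show ?thesis unfolding z_def[symmetric]
    by (intro exI[of _ "1 / cmod z"]) (simp add: dirvec_def vec_eq_iff forall_2 c)
qed

lemma dirvec_phiA:
  assumes "A *v dirvec y \<noteq> 0"
  shows "\<exists>s. s \<noteq> 0 \<and> dirvec (phiA A y) = s *\<^sub>R (A *v dirvec y)"
proof -
  obtain s where s: "s \<noteq> 0" "dirvec (Arg (Complex ((A *v dirvec y)$1) ((A *v dirvec y)$2))) = s *\<^sub>R (A *v dirvec y)"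
    using dirvec_Arg[OF assms] by blast
  obtain t where t: "t^2 = 1" "dirvec (phiA A y) = t *\<^sub>R dirvec (Arg (Complex ((A *v dirvec y)$1) ((A *v dirvec y)$2)))"
    unfolding phiA_def Let_def using dirvec_modpi by blast
  have "t \<noteq> 0" using t(1) by auto
  then show ?thesis using s t by (intro exI[of _ "t * s"]) simp
qed

lemma phiw_Cons: "phiw (A # w) = phiA A \<circ> phiw w" by (simp add: phiw_def)
lemma phiw_Nil: "phiw [] = id" by (simp add: phiw_def)
lemma matw_Cons: "matw (A # w) = A ** matw w" by (simp add: matw_def)
lemma matw_Nil: "matw [] = mat 1" by (simp add: matw_def)
lemma matw_append: "matw (u @ w) = matw u ** matw w"
  by (induction u) (simp_all add: matw_Cons matw_Nil matrix_mul_assoc matrix_mul_lid)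
lemma phiw_append: "phiw (u @ w) = phiw u \<circ> phiw w"
  by (induction u) (simp_all add: phiw_Cons phiw_Nil comp_assoc)

lemma invertible_mv_nz:
  assumes "invertible (A::real^2^2)" "v \<noteq> 0" shows "A *v v \<noteq> 0"
proof
  assume "A *v v = 0"
  obtain B where "B ** A = mat 1" using assms(1) unfolding invertible_def by blast
  then have "v = B *v (A *v v)" by (simp add: matrix_vector_mul_assoc matrix_vector_mul_lid)
  with \<open>A *v v = 0\<close> assms(2) show False by simp
qed

lemma invertible_I2: "invertible (mat 1 :: real^2^2)"
  unfolding invertible_def by (metis matrix_mul_lid)

lemma invertible_matw: "(\<forall>A\<in>set w. invertible A) \<Longrightarrow> invertible (matw w)"
  by (induction w) (auto simp: matw_Cons matw_Nil invertible_mult invertible_I2)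

lemma dirvec_nz: "dirvec x \<noteq> 0"
  using norm_dirvec[of x] by auto

lemma dirvec_phiw:
  assumes "\<forall>A\<in>set w. invertible A"
  shows "\<exists>s. s \<noteq> 0 \<and> dirvec (phiw w x) = s *\<^sub>R (matw w *v dirvec x)"
  using assms
proof (induction w)
  case Nil then show ?case by (intro exI[of _ 1]) (simp add: phiw_Nil matw_Nil matrix_vector_mul_lid)
next
  case (Cons A w)
  then obtain s where s: "s \<noteq> 0" "dirvec (phiw w x) = s *\<^sub>R (matw w *v dirvec x)" by auto
  have "A *v dirvec (phiw w x) \<noteq> 0" using Cons.prems invertible_mv_nz dirvec_nz by simp
  then obtain t where t: "t \<noteq> 0" "dirvec (phiA A (phiw w x)) = t *\<^sub>R (A *v dirvec (phiw w x))"
    using dirvec_phiA by blast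
  show ?case using s t
    by (intro exI[of _ "t * s"]) (simp add: phiw_Cons matw_Cons matrix_vector_mul_assoc[symmetric] matrix_vector_mult_scaleR)
qed

lemma dP_props: "sin (dP a b) = \<bar>sin (a - b)\<bar>" "0 \<le> dP a b" "dP a b \<le> pi / 2"
proof -
  define m where "m = modpi (a - b)"
  obtain k where k: "m = a - b - pi * of_int k" using modpi_ex m_def by blast
  have mb: "0 \<le> m" "m < pi" using modpi_bounds m_def by auto
  have sm: "sin m \<ge> 0" using mb sin_ge_zero by auto
  have "sin m = sin (a - b) * cos (pi * of_int k)" by (simp add: k sin_diff)
  then have "\<bar>sin m\<bar> = \<bar>sin (a - b)\<bar>"
    using cos_pi_int_sq[of k] by (simp add: abs_mult power2_eq_1_iff)
  then have e: "sin m = \<bar>sin (a - b)\<bar>" using sm by simp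
  have d: "dP a b = min m (pi - m)" by (simp add: dP_def m_def)
  show "sin (dP a b) = \<bar>sin (a - b)\<bar>" using e by (simp add: d min_def)
  show "0 \<le> dP a b" "dP a b \<le> pi / 2" using mb by (auto simp: d min_def)
qed

lemma sin_lower: assumes "0 \<le> y" "y \<le> pi/2" shows "y / 4 \<le> sin y"
proof (cases "y \<le> 1")
  case True
  have "\<bar>sin y - (\<Sum>m<2. sin_coeff m * y ^ m)\<bar> \<le> inverse (fact 2) * \<bar>y\<bar> ^ 2"
    by (rule Maclaurin_sin_bound)
  then have "\<bar>sin y - y\<bar> \<le> y^2 / 2" using assms
    by (simp add: sin_coeff_def numeral_2_eq_2 lessThan_Suc)
  moreover have "y^2 \<le> y" using True assms by (simp add: power2_eq_square mult_le_one mult_left_le)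
  ultimately show ?thesis using assms by linarith
next
  case False
  have "sin (1::real) \<le> sin y" using False assms pi_ge_two by (intro sin_monotone_2pi_le) auto
  moreover have "\<bar>sin 1 - (\<Sum>m<2. sin_coeff m * 1 ^ m)\<bar> \<le> inverse (fact 2) * \<bar>1::real\<bar> ^ 2"
    by (rule Maclaurin_sin_bound)
  then have "\<bar>sin (1::real) - 1\<bar> \<le> 1 / 2"
    by (simp add: sin_coeff_def numeral_2_eq_2 lessThan_Suc)
  moreover have "y \<le> 2" using assms pi_half_less_two by linarith
  ultimately show ?thesis by linarith
qed

lemma key_sin:
  assumes "\<forall>A\<in>set i. invertible A" "\<forall>A\<in>set j. invertible A"
  shows "\<bar>sin (phiw i x - phiw j x)\<bar> * (norm (matw i *v dirvec x) * norm (matw j *v dirvec x))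
         = \<bar>cr (matw i *v dirvec x) (matw j *v dirvec x)\<bar>"
proof -
  define p where "p = matw i *v dirvec x"
  define q where "q = matw j *v dirvec x"
  obtain s where s: "s \<noteq> 0" "dirvec (phiw i x) = s *\<^sub>R p" using dirvec_phiw[OF assms(1)] p_def by blast
  obtain t where t: "t \<noteq> 0" "dirvec (phiw j x) = t *\<^sub>R q" using dirvec_phiw[OF assms(2)] q_def by blast
  have ns: "\<bar>s\<bar> * norm p = 1" using norm_dirvec[of "phiw i x"] s by simp
  have nt: "\<bar>t\<bar> * norm q = 1" using norm_dirvec[of "phiw j x"] t by simp
  have "sin (phiw i x - phiw j x) = t * s * cr q p" by (simp add: sin_cr s t cr_scale)
  then have h: "\<bar>sin (phiw i x - phiw j x)\<bar> = \<bar>s\<bar> * \<bar>t\<bar> * \<bar>cr p q\<bar>"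
    by (simp add: abs_mult cr_swap[of q p])
  have "\<bar>sin (phiw i x - phiw j x)\<bar> * (norm p * norm q) = (\<bar>s\<bar> * norm p) * (\<bar>t\<bar> * norm q) * \<bar>cr p q\<bar>"
    unfolding h by (simp only: mult_ac)
  also have "\<dots> = \<bar>cr p q\<bar>" using ns nt by simp
  finally show ?thesis by (simp only: p_def q_def)
qed

definition mn :: "real^2^2 \<Rightarrow> real" where "mn B = onorm (\<lambda>v. B *v v)"

lemma bl_mv: "bounded_linear (\<lambda>v. (B::real^2^2) *v v)"
  by simp

lemma mn_bound: "norm (B *v v) \<le> mn B * norm v"
  unfolding mn_def using onorm[OF bl_mv] .

lemma mn_nonneg: "0 \<le> mn B"
  unfolding mn_def using onorm_pos_le[OF bl_mv] .

lemma mn_mult: "mn (A ** B) \<le> mn A * mn B"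
proof -
  have "(\<lambda>v. (A ** B) *v v) = (\<lambda>v. A *v v) \<circ> (\<lambda>v. B *v v)"
    by (auto simp: matrix_vector_mul_assoc)
  then show ?thesis unfolding mn_def using onorm_compose[OF bl_mv bl_mv] by simp
qed

lemma mn_I: "mn (mat 1) \<le> 1"
proof -
  have eq: "(\<lambda>v. mat 1 *v v) = (\<lambda>x::real^2. x)" by (rule ext) (simp add: matrix_vector_mul_lid)
  show ?thesis unfolding mn_def eq by (rule onorm_id_le)
qed

lemma mn_diff: "mn (A - B) \<le> mn A + mn B"
  unfolding mn_def
proof (rule onorm_le)
  fix v
  have "norm ((A - B) *v v) = norm (A *v v - B *v v)" by (simp add: matrix_vector_mult_diff_rdistrib)
  also have "\<dots> \<le> norm (A *v v) + norm (B *v v)" by (rule norm_triangle_ineq4)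
  also have "\<dots> \<le> (onorm (\<lambda>v. A *v v) + onorm (\<lambda>v. B *v v)) * norm v"
    using mn_bound[of A v] mn_bound[of B v] unfolding mn_def by (simp add: algebra_simps)
  finally show "norm ((A - B) *v v) \<le> (onorm (\<lambda>v. A *v v) + onorm (\<lambda>v. B *v v)) * norm v" .
qed

lemma mv_comp: fixes B :: "real^2^2" shows "(B *v v)$k = B$k$1 * v$1 + B$k$2 * v$2"
  by (simp add: matrix_vector_mult_def sum_2)

lemma mn_entry: "\<bar>B$k$l\<bar> \<le> mn B"
proof -
  have "(B *v axis l 1)$k = B$k$l"
    by (simp add: matrix_vector_mult_def axis_def if_distrib cong: if_cong)
  then have "\<bar>B$k$l\<bar> \<le> norm (B *v axis l 1)" by (metis component_le_norm_cart)
  also have "\<dots> \<le> mn B * norm (axis l (1::real))" by (rule mn_bound)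
  finally show ?thesis by simp
qed

definition esum :: "real^2^2 \<Rightarrow> real" where
  "esum B = \<bar>B$1$1\<bar> + \<bar>B$1$2\<bar> + \<bar>B$2$1\<bar> + \<bar>B$2$2\<bar>"

lemma mn_esum: "mn B \<le> esum B"
  unfolding mn_def
proof (rule onorm_le)
  fix v :: "real^2"
  have a: "\<bar>v$1\<bar> \<le> norm v" "\<bar>v$2\<bar> \<le> norm v" by (rule component_le_norm_cart)+
  have "norm (B *v v) \<le> \<bar>(B *v v)$1\<bar> + \<bar>(B *v v)$2\<bar>"
    using norm_le_l1_cart[of "B *v v"] by (simp add: sum_2)
  also have "\<dots> \<le> (\<bar>B$1$1\<bar> + \<bar>B$1$2\<bar>) * norm v + (\<bar>B$2$1\<bar> + \<bar>B$2$2\<bar>) * norm v"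
  proof -
    have "\<bar>(B *v v)$k\<bar> \<le> (\<bar>B$k$1\<bar> + \<bar>B$k$2\<bar>) * norm v" for k
    proof -
      have "\<bar>(B *v v)$k\<bar> \<le> \<bar>B$k$1\<bar> * \<bar>v$1\<bar> + \<bar>B$k$2\<bar> * \<bar>v$2\<bar>"
        unfolding mv_comp by (metis abs_mult abs_triangle_ineq)
      also have "\<dots> \<le> \<bar>B$k$1\<bar> * norm v + \<bar>B$k$2\<bar> * norm v"
        using a by (intro add_mono mult_left_mono) auto
      finally show ?thesis by (simp add: algebra_simps)
    qed
    then show ?thesis by (intro add_mono)
  qed
  also have "\<dots> = esum B * norm v" by (simp add: esum_def algebra_simps)
  finally show "norm (B *v v) \<le> esum B * norm v" .
qed

lemma cr_mv: "cr (B *v p) (B *v q) = det B * cr p q"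
  by (simp add: cr_def mv_comp det_2 algebra_simps)

lemma mv_lower: "\<bar>det B\<bar> * norm v \<le> mn B * norm (B *v v)"
proof (cases "v = 0")
  case True then show ?thesis by simp
next
  case False
  define u :: "real^2" where "u = (\<chi> i. if i = 1 then - v$2 else v$1)"
  have nu: "norm u = norm v"
  proof -
    have "norm u ^ 2 = norm v ^ 2" by (simp add: norm2_sq u_def)
    then show ?thesis by (simp add: power2_eq_iff_nonneg)
  qed
  have "cr v u = norm v ^ 2" using norm2_sq[of v] by (simp add: cr_def u_def power2_eq_square)
  then have "\<bar>det B\<bar> * norm v ^ 2 = \<bar>cr (B *v v) (B *v u)\<bar>" by (simp add: cr_mv abs_mult)
  also have "\<dots> \<le> norm (B *v v) * norm (B *v u)" by (rule cr_le)
  also have "\<dots> \<le> norm (B *v v) * (mn B * norm v)" using nu mn_bound[of B u]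
    by (intro mult_left_mono) auto
  finally have "(\<bar>det B\<bar> * norm v) * norm v \<le> (mn B * norm (B *v v)) * norm v"
    by (simp add: power2_eq_square algebra_simps)
  then show ?thesis using False by simp
qed

lemma mn_matw: "(\<forall>A\<in>set w. mn A \<le> K) \<Longrightarrow> 1 \<le> K \<Longrightarrow> mn (matw w) \<le> K ^ length w"
proof (induction w)
  case Nil then show ?case using mn_I by (simp add: matw_Nil)
next
  case (Cons A w)
  have "mn (matw (A # w)) \<le> mn A * mn (matw w)" by (simp add: matw_Cons mn_mult)
  also have "\<dots> \<le> K * K ^ length w" using Cons mn_nonneg by (intro mult_mono) auto
  finally show ?case by simp
qed

lemma det_matw: "(\<forall>A\<in>set w. d \<le> \<bar>det A\<bar>) \<Longrightarrow> 0 \<le> d \<Longrightarrow> d ^ length w \<le> \<bar>det (matw w)\<bar>"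
proof (induction w)
  case Nil then show ?case by (simp add: matw_Nil det_I)
next
  case (Cons A w)
  have "d * d ^ length w \<le> \<bar>det A\<bar> * \<bar>det (matw w)\<bar>" using Cons by (intro mult_mono) auto
  then show ?case by (simp add: matw_Cons det_mul abs_mult)
qed

lemma det_matw1: "(\<forall>A\<in>set w. det A = 1) \<Longrightarrow> det (matw w) = 1"
  by (induction w) (simp_all add: matw_Cons matw_Nil det_mul det_I)

lemma common_prefix:
  "length i = length j \<Longrightarrow> i \<noteq> j \<Longrightarrow>
   \<exists>u i' j'. i = u @ i' \<and> j = u @ j' \<and> length i' = length j' \<and> i' \<noteq> [] \<and> j' \<noteq> [] \<and> hd i' \<noteq> hd j'"
proof (induction i arbitrary: j)
  case Nil then show ?case by simp
next
  case (Cons a i)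
  then obtain b j0 where j: "j = b # j0" by (cases j) auto
  show ?case
  proof (cases "a = b")
    case True
    then have "i \<noteq> j0" "length i = length j0" using Cons.prems j by auto
    then obtain u i' j' where "i = u @ i' \<and> j0 = u @ j' \<and> length i' = length j' \<and> i' \<noteq> [] \<and> j' \<noteq> [] \<and> hd i' \<noteq> hd j'"
      using Cons.IH by blast
    then show ?thesis using True j by (intro exI[of _ "a # u"] exI[of _ i'] exI[of _ j']) auto
  next
  case False
    then show ?thesis using j Cons.prems by (intro exI[of _ "[]"] exI[of _ "a # i"] exI[of _ j]) auto
  qed
qed

lemma exists_big:
  assumes "J \<noteq> {}" "(SUP x\<in>J. f x) > (e::real)"
  shows "\<exists>x\<in>J. f x > e"
proof (rule ccontr)
  assume "\<not> ?thesis"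
  then have "(SUP x\<in>J. f x) \<le> e" using assms(1) by (intro cSUP_least) auto
  with assms(2) show False by simp
qed

lemma part1:
  assumes fin: "finite \<A>" and inv: "\<forall>A\<in>\<A>. invertible A" and J: "J \<noteq> {}"
    and sep: "strong_exp_sep \<A> J"
  shows "strongly_diophantine \<A>"
proof -
  obtain c where c: "c > 0" and hc: "\<And>n i j. i \<in> words \<A> n \<Longrightarrow> j \<in> words \<A> n \<Longrightarrow> n \<ge> 1 \<Longrightarrow> hd i \<noteq> hd j \<Longrightarrow>
        (SUP x\<in>J. dP (phiw i x) (phiw j x)) > c ^ n"
    using sep unfolding strong_exp_sep_def by blast
  define K where "K = Max (insert 1 (mn ` \<A>))"
  define d where "d = Min (insert 1 ((\<lambda>A. \<bar>det A\<bar>) ` \<A>))"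
  have K1: "1 \<le> K" and KA: "\<And>A. A \<in> \<A> \<Longrightarrow> mn A \<le> K" using fin by (auto simp: K_def)
  have dA: "\<And>A. A \<in> \<A> \<Longrightarrow> d \<le> \<bar>det A\<bar>" using fin by (auto simp: d_def)
  have dpos: "0 < d" using fin inv by (auto simp: d_def invertible_det_nz)
  define c0 where "c0 = min c 1"
  have c0: "0 < c0" "c0 \<le> 1" "c0 \<le> c" using c by (auto simp: c0_def)
  define r where "r = c0 * d / K"
  have rpos: "0 < r" using c0 dpos K1 by (simp add: r_def)
  have rle: "r \<le> d / K" using c0 dpos K1 by (simp add: r_def divide_right_mono mult_left_le_one_le)
  have wb: "mn (matw w) \<le> K ^ length w" "d ^ length w \<le> \<bar>det (matw w)\<bar>" "invertible (matw w)"
    if "set w \<subseteq> \<A>" for w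
    using that mn_matw[of w K] det_matw[of w d] K1 KA dA dpos invertible_matw[of w] inv by auto
  have low: "(d / K) ^ length w * norm y \<le> norm (matw w *v y)" if "set w \<subseteq> \<A>" for w y
  proof -
    have "d ^ length w * norm y \<le> \<bar>det (matw w)\<bar> * norm y" using wb(2)[OF that] by (simp add: mult_right_mono)
    also have "\<dots> \<le> mn (matw w) * norm (matw w *v y)" by (rule mv_lower)
    also have "\<dots> \<le> K ^ length w * norm (matw w *v y)" using wb(1)[OF that] by (simp add: mult_right_mono)
    finally show ?thesis using K1 by (simp add: power_divide field_simps)
  qed
  show ?thesis unfolding strongly_diophantine_def
  proof (intro exI[of _ "r / 4"] conjI allI ballI impI)
    show "0 < r / 4" using rpos by simp
    fix n i j assume i: "i \<in> words \<A> n" and j: "j \<in> words \<A> n" and ij: "i \<noteq> j"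
    have li: "length i = n" "set i \<subseteq> \<A>" and lj: "length j = n" "set j \<subseteq> \<A>" using i j by (auto simp: words_def)
    obtain u i' j' where dec: "i = u @ i'" "j = u @ j'" "length i' = length j'" "i' \<noteq> []" "j' \<noteq> []" "hd i' \<noteq> hd j'"
      using common_prefix[of i j] li lj ij by auto
    define m where "m = length i'"
    define l where "l = length u"
    have nlm: "n = l + m" using li dec by (simp add: l_def m_def)
    have m1: "m \<ge> 1" using dec by (simp add: m_def Suc_le_eq)
    have su: "set u \<subseteq> \<A>" and si: "set i' \<subseteq> \<A>" and sj: "set j' \<subseteq> \<A>" using li lj dec by auto
    have "i' \<in> words \<A> m" "j' \<in> words \<A> m" using si sj dec by (auto simp: words_def m_def)
    then have "(SUP x\<in>J. dP (phiw i' x) (phiw j' x)) > c ^ m" using hc m1 dec by blast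
    then obtain x where x: "x \<in> J" "dP (phiw i' x) (phiw j' x) > c ^ m" using exists_big[OF J] by blast
    define v where "v = dirvec x"
    define p where "p = matw i' *v v"
    define q where "q = matw j' *v v"
    define y where "y = dP (phiw i' x) (phiw j' x)"
    have yb: "0 \<le> y" "y \<le> pi/2" "sin y = \<bar>sin (phiw i' x - phiw j' x)\<bar>" using dP_props y_def by auto
    have "c0 ^ m \<le> c ^ m" using c0 by (intro power_mono) auto
    then have sy: "c0 ^ m / 4 < sin y" using sin_lower[OF yb(1,2)] x y_def by linarith
    have invs: "\<forall>A\<in>set i'. invertible A" "\<forall>A\<in>set j'. invertible A" using si sj inv by auto
    have ks: "sin y * (norm p * norm q) = \<bar>cr p q\<bar>" using key_sin[OF invs, of x] yb(3) by (simp add: p_def q_def v_def)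
    have qnz: "q \<noteq> 0" using invertible_mv_nz[OF wb(3)[OF sj] dirvec_nz] by (simp add: q_def v_def)
    have "\<bar>cr p q\<bar> \<le> norm (p - q) * norm q" using cr_le[of "p - q" q] by (simp add: cr_diff)
    with ks have "(sin y * norm p) * norm q \<le> norm (p - q) * norm q" by (simp add: mult_ac)
    then have s1: "sin y * norm p \<le> norm (p - q)" using qnz by simp
    have pl: "(d / K) ^ m \<le> norm p" using low[OF si, of v] by (simp add: p_def v_def norm_dirvec m_def)
    have dk: "0 < d / K" using dpos K1 by simp
    have "c0 ^ m / 4 * (d / K) ^ m < sin y * (d / K) ^ m"
      using sy dk by (intro mult_strict_right_mono) auto
    also have "\<dots> \<le> sin y * norm p" using sy pl c0 by (intro mult_left_mono) (auto intro: order.trans[OF _ less_imp_le[OF sy]])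
    finally have "c0 ^ m / 4 * (d / K) ^ m < sin y * norm p" .
    with s1 have s2: "c0 ^ m / 4 * (d / K) ^ m < norm (p - q)" by linarith
    have eqv: "(matw i - matw j) *v v = matw u *v (p - q)"
      by (simp add: dec matw_append p_def q_def matrix_vector_mult_diff_rdistrib matrix_vector_mult_diff_distrib matrix_vector_mul_assoc)
    have "(d / K) ^ l * norm (p - q) \<le> norm ((matw i - matw j) *v v)" using low[OF su, of "p - q"] eqv by (simp add: l_def)
    moreover have "(d / K) ^ l * (c0 ^ m / 4 * (d / K) ^ m) < (d / K) ^ l * norm (p - q)"
      using s2 dk by simp
    moreover have "r ^ n / 4 \<le> (d / K) ^ l * (c0 ^ m / 4 * (d / K) ^ m)"
    proof -
      have "r ^ l \<le> (d / K) ^ l" using rle rpos by (intro power_mono) auto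
      moreover have "r ^ m = c0 ^ m * (d / K) ^ m" unfolding r_def by (simp add: power_mult_distrib power_divide)
      ultimately have "r ^ l * r ^ m \<le> (d / K) ^ l * (c0 ^ m * (d / K) ^ m)"
        using rpos by (metis mult_right_mono zero_le_power less_imp_le)
      then show ?thesis by (simp add: nlm power_add)
    qed
    moreover have "norm ((matw i - matw j) *v v) \<le> onorm (\<lambda>v. (matw i - matw j) *v v)"
      using mn_bound[of "matw i - matw j" v] by (simp add: mn_def v_def norm_dirvec)
    moreover have "(r / 4) ^ n \<le> r ^ n / 4"
    proof -
      have "(4::real) ^ 1 \<le> 4 ^ n" using m1 nlm by (intro power_increasing) auto
      then have "r ^ n * 4 \<le> r ^ n * 4 ^ n" using rpos by (intro mult_left_mono) auto
      then show ?thesis using rpos by (simp add: power_divide pos_divide_le_eq)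
    qed
    ultimately show "(r / 4) ^ n < onorm (\<lambda>v. (matw i - matw j) *v v)" by linarith
  qed
qed

lemma alg_core:
  fixes a b c d e h A0 :: real
  assumes det: "a*d - b*c = 1" and b: "\<bar>b\<bar> \<le> e" and c: "\<bar>c\<bar> \<le> e" and x: "\<bar>a + b - c - d\<bar> \<le> 2*e"
    and aA: "\<bar>a\<bar> \<le> A0" and A1: "1 \<le> A0" and h0: "0 < h" and h1: "h \<le> 1"
    and SE: "h < \<bar>a-1\<bar> + \<bar>b\<bar> + \<bar>c\<bar> + \<bar>d-1\<bar>" and SF: "h < \<bar>a+1\<bar> + \<bar>b\<bar> + \<bar>c\<bar> + \<bar>d+1\<bar>"
  shows "h^2 / (80*A0) \<le> e"
proof (rule ccontr)
  assume "\<not> ?thesis"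
  then have e1: "e < h^2 / (80*A0)" by simp
  have e0: "0 \<le> e" using b by linarith
  have "h^2 \<le> h" using h0 h1 by (simp add: power2_eq_square mult_le_one mult_left_le)
  moreover have "h^2 / (80*A0) \<le> h^2 / 80" using A1 by (intro divide_left_mono) auto
  ultimately have "h^2 / (80*A0) \<le> h / 80" by linarith
  then have e2: "e < h / 80" using e1 by linarith
  have ad: "\<bar>a - d\<bar> \<le> 4*e" using b c x by linarith
  have "\<bar>d-1\<bar> \<le> \<bar>a-1\<bar> + 4*e" "\<bar>d+1\<bar> \<le> \<bar>a+1\<bar> + 4*e" using ad by linarith+
  then have m1: "h/4 < \<bar>a-1\<bar>" and p1: "h/4 < \<bar>a+1\<bar>" using SE SF b c e2 by linarith+
  have "h/4 * (h/4) < \<bar>a-1\<bar> * \<bar>a+1\<bar>" using m1 p1 h0 by (intro mult_strict_mono) auto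
  then have l: "h^2/16 < \<bar>a*a - 1\<bar>" by (simp add: power2_eq_square abs_mult[symmetric] algebra_simps)
  have "a*a - 1 = a*(a-d) + b*c" using det by (simp add: algebra_simps)
  then have "\<bar>a*a - 1\<bar> \<le> \<bar>a\<bar>*\<bar>a-d\<bar> + \<bar>b\<bar>*\<bar>c\<bar>" by (simp add: abs_mult[symmetric] abs_triangle_ineq)
  also have "\<dots> \<le> A0 * (4*e) + e * e" using aA ad b c e0 by (intro add_mono mult_mono) auto
  also have "\<dots> \<le> A0 * (4*e) + A0 * e"
  proof -
    have "e \<le> 1" using e2 h1 by linarith
    then have "e * e \<le> 1 * e" using e0 by (intro mult_right_mono) auto
    also have "\<dots> \<le> A0 * e" using A1 e0 by (intro mult_right_mono) auto
    finally show ?thesis by simp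
  qed
  finally have "h^2/16 < 5 * A0 * e" using l by (simp add: algebra_simps)
  moreover have "5 * A0 * e < 5 * A0 * (h^2 / (80*A0))" using e1 A1 by (intro mult_strict_left_mono) auto
  moreover have "5 * A0 * (h^2 / (80*A0)) = h^2/16" using A1 by (simp add: field_simps)
  ultimately show False by simp
qed

definition adj2 :: "real^2^2 \<Rightarrow> real^2^2" where
  "adj2 B = (\<chi> i j. if i = 1 then (if j = 1 then B$2$2 else - B$1$2) else (if j = 1 then - B$2$1 else B$1$1))"

lemma mm_comp: fixes A B :: "real^2^2" shows "(A ** B)$i$j = A$i$1*B$1$j + A$i$2*B$2$j"
  by (simp add: matrix_matrix_mult_def sum_2)

lemma adj2_right: "det B = 1 \<Longrightarrow> B ** adj2 B = mat 1"
  by (simp add: vec_eq_iff forall_2 mm_comp adj2_def mat_def det_2 algebra_simps)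

lemma det_adj2: "det (adj2 B) = det B"
  by (simp add: adj2_def det_2 algebra_simps)

lemma esum_adj2: "esum (adj2 B) = esum B"
  by (simp add: adj2_def esum_def)

lemma esum_le: "esum B \<le> 4 * mn B"
  using mn_entry[of B 1 1] mn_entry[of B 1 2] mn_entry[of B 2 1] mn_entry[of B 2 2]
  by (simp add: esum_def)

lemma dirvec_vals: "dirvec 0 = (\<chi> i. if i = 1 then 1 else 0)" "dirvec (pi/2) = (\<chi> i. if i = 1 then 0 else 1)"
  "dirvec (pi/4) = (\<chi> i. sqrt 2 / 2)"
  by (simp_all add: dirvec_def cos_45 sin_45 vec_eq_iff)

lemma sep_core:
  fixes B B' :: "real^2^2"
  assumes dB: "det B = 1" and dB': "det B' = 1" and LB: "mn B \<le> L" and LB': "mn B' \<le> L" and L1: "1 \<le> L"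
    and h0: "0 < \<eta>" and h1: "\<eta> \<le> 1" and hm: "\<eta> < mn (B - B')" and hp: "\<eta> < mn (B + B')"
  shows "\<exists>x\<in>{0, pi/4, pi/2}. \<eta>^2 / (320 * L^4) \<le> \<bar>cr (B *v dirvec x) (B' *v dirvec x)\<bar>"
proof -
  define M where "M = adj2 B' ** B"
  have BM: "B = B' ** M" unfolding M_def using adj2_right[OF dB'] by (simp add: matrix_mul_assoc matrix_mul_lid)
  have crM: "cr (B *v v) (B' *v v) = cr (M *v v) v" for v
    using cr_mv[of B' "M *v v" v] dB' by (simp add: BM matrix_vector_mul_assoc)
  define a where "a = M$1$1"
  define b where "b = M$1$2"
  define c where "c = M$2$1"
  define d where "d = M$2$2"
  have detM: "a*d - b*c = 1" using det_mul[of "adj2 B'" B] dB dB' det_adj2[of B']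
    by (simp add: M_def[symmetric] det_2 a_def b_def c_def d_def)
  have c0: "cr (M *v dirvec 0) (dirvec 0) = - c" by (simp add: dirvec_vals cr_def mv_comp c_def)
  have c2: "cr (M *v dirvec (pi/2)) (dirvec (pi/2)) = b" by (simp add: dirvec_vals cr_def mv_comp b_def)
  have c1: "cr (M *v dirvec (pi/4)) (dirvec (pi/4)) = (a + b - c - d) / 2"
  proof -
    have s: "sqrt 2 / 2 * (sqrt 2 / 2) = (1/2::real)" by (simp add: field_simps)
    have g: "cr (M *v (\<chi> i. t)) (\<chi> i. t) = (a + b - c - d) * (t * t)" for t :: real
      by (simp add: cr_def mv_comp a_def b_def c_def d_def algebra_simps)
    show ?thesis unfolding dirvec_vals g s by simp
  qed
  define e where "e = max \<bar>c\<bar> (max \<bar>b\<bar> \<bar>(a + b - c - d) / 2\<bar>)"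
  have "\<bar>(a + b - c - d) / 2\<bar> \<le> e" unfolding e_def by (metis max.cobounded2 order.trans)
  then have e3: "\<bar>a + b - c - d\<bar> \<le> 2*e" by simp
  have "\<bar>b\<bar> \<le> e" "\<bar>c\<bar> \<le> e" by (auto simp: e_def)
  note eb = this e3
  have ex: "\<exists>x\<in>{0, pi/4, pi/2}. e = \<bar>cr (M *v dirvec x) (dirvec x)\<bar>"
  proof -
    have "e = \<bar>c\<bar> \<or> e = \<bar>b\<bar> \<or> e = \<bar>(a + b - c - d) / 2\<bar>" unfolding e_def by (auto simp: max_def)
    moreover have "\<bar>c\<bar> = \<bar>cr (M *v dirvec 0) (dirvec 0)\<bar>" using c0 by simp
    moreover have "\<bar>b\<bar> = \<bar>cr (M *v dirvec (pi/2)) (dirvec (pi/2))\<bar>" using c2 by simp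
    moreover have "\<bar>(a + b - c - d) / 2\<bar> = \<bar>cr (M *v dirvec (pi/4)) (dirvec (pi/4))\<bar>" using c1 by simp
    ultimately show ?thesis by blast
  qed
  have sub: "B - B' = B' ** (M - mat 1)" "B + B' = B' ** (M + mat 1)"
    by (simp_all add: BM vec_eq_iff forall_2 mm_comp mat_def algebra_simps)
  have esE: "esum (M - mat 1) = \<bar>a-1\<bar> + \<bar>b\<bar> + \<bar>c\<bar> + \<bar>d-1\<bar>"
    by (simp add: esum_def mat_def a_def b_def c_def d_def)
  have esF: "esum (M + mat 1) = \<bar>a+1\<bar> + \<bar>b\<bar> + \<bar>c\<bar> + \<bar>d+1\<bar>"
    by (simp add: esum_def mat_def a_def b_def c_def d_def)
  have bnd: "mn (B' ** N) \<le> L * esum N" for N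
  proof -
    have "mn (B' ** N) \<le> mn B' * mn N" by (rule mn_mult)
    also have "\<dots> \<le> L * esum N" using LB' mn_esum[of N] mn_nonneg[of N] mn_nonneg[of B'] L1
      by (intro mult_mono) auto
    finally show ?thesis .
  qed
  define h where "h = \<eta> / L"
  have hpos: "0 < h" "h \<le> 1" using h0 h1 L1 by (auto simp: h_def pos_divide_le_eq)
  have "\<eta> < L * esum (M - mat 1)" using hm bnd[of "M - mat 1"] sub by simp
  then have SE: "h < \<bar>a-1\<bar> + \<bar>b\<bar> + \<bar>c\<bar> + \<bar>d-1\<bar>" using L1 by (simp add: h_def esE pos_divide_less_eq mult.commute)
  have "\<eta> < L * esum (M + mat 1)" using hp bnd[of "M + mat 1"] sub by simp
  then have SF: "h < \<bar>a+1\<bar> + \<bar>b\<bar> + \<bar>c\<bar> + \<bar>d+1\<bar>" using L1 by (simp add: h_def esF pos_divide_less_eq mult.commute)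
  have "\<bar>a\<bar> \<le> mn M" unfolding a_def by (rule mn_entry)
  also have "\<dots> \<le> mn (adj2 B') * mn B" unfolding M_def by (rule mn_mult)
  also have "\<dots> \<le> (4 * L) * L"
  proof -
    have "mn (adj2 B') \<le> 4 * L" using mn_esum[of "adj2 B'"] esum_adj2[of B'] esum_le[of B'] LB' by simp
    then show ?thesis using LB mn_nonneg[of B] mn_nonneg[of "adj2 B'"] by (intro mult_mono) auto
  qed
  finally have aA: "\<bar>a\<bar> \<le> 4 * L^2" by (simp add: power2_eq_square)
  have A1: "1 \<le> 4 * L^2" using L1 by (simp add: power2_eq_square) (metis mult_mono' one_le_numeral order.trans mult_1 zero_le_one L1)
  have "h^2 / (80 * (4 * L^2)) \<le> e"
    by (rule alg_core[OF detM eb aA A1 hpos SE SF])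
  moreover have "h^2 / (80 * (4 * L^2)) = \<eta>^2 / (320 * L^4)" using L1
    by (simp add: h_def power_divide field_simps)
  ultimately show ?thesis using ex crM by auto
qed



lemma comm_eq: fixes X Y :: "real^2^2" shows "X ** Y - Y ** X = X ** (X + Y) - (X + Y) ** X"
  by (simp add: vec_eq_iff forall_2 mm_comp algebra_simps)

lemma mn_comm: "mn (X ** Y - Y ** X) \<le> 2 * mn X * mn (X + Y)"
proof -
  have "mn (X ** Y - Y ** X) \<le> mn (X ** (X + Y)) + mn ((X + Y) ** X)" unfolding comm_eq[of X Y] by (rule mn_diff)
  also have "\<dots> \<le> mn X * mn (X + Y) + mn (X + Y) * mn X" by (intro add_mono mn_mult)
  finally show ?thesis by simp
qed

lemma mn_add_eq: "mn (X + Y) = onorm (\<lambda>v. (X + Y) *v v)" by (simp add: mn_def)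

lemma part2:
  assumes fin: "finite \<A>" and det1: "\<forall>A\<in>\<A>. det A = 1" and sd: "strongly_diophantine \<A>"
  shows "strong_exp_sep \<A> {0, pi/4, pi/2}"
proof -
  define J :: "real set" where "J = {0, pi/4, pi/2}"
  obtain c where c: "c > 0" and hc: "\<And>n i j. i \<in> words \<A> n \<Longrightarrow> j \<in> words \<A> n \<Longrightarrow> i \<noteq> j \<Longrightarrow>
        c ^ n < mn (matw i - matw j)"
    using sd unfolding strongly_diophantine_def mn_def by blast
  define K where "K = Max (insert 1 (mn ` \<A>))"
  have K1: "1 \<le> K" and KA: "\<And>A. A \<in> \<A> \<Longrightarrow> mn A \<le> K" using fin by (auto simp: K_def)
  define c0 where "c0 = min c 1"
  have c0: "0 < c0" "c0 \<le> 1" "c0 \<le> c" using c by (auto simp: c0_def)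
  have wb: "mn (matw w) \<le> K ^ length w" "det (matw w) = 1" "invertible (matw w)" "\<forall>A\<in>set w. invertible A"
    if "set w \<subseteq> \<A>" for w
  proof -
    show "mn (matw w) \<le> K ^ length w" using that mn_matw[of w K] K1 KA by auto
    show "det (matw w) = 1" using that det_matw1[of w] det1 by auto
    show inv: "\<forall>A\<in>set w. invertible A" using that det1 by (auto simp: invertible_det_nz)
    show "invertible (matw w)" using invertible_matw[OF inv] .
  qed
  have C: "\<exists>x\<in>J. (c0^n)^4 / (1280 * (K^n)^6) \<le> \<bar>cr (matw i *v dirvec x) (matw j *v dirvec x)\<bar>"
    if i: "i \<in> words \<A> n" and j: "j \<in> words \<A> n" and ij: "i \<noteq> j" for n i j
  proof -
    have li: "length i = n" "set i \<subseteq> \<A>" and lj: "length j = n" "set j \<subseteq> \<A>" using i j by (auto simp: words_def)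
    define L where "L = K ^ n"
    define C0 where "C0 = c0 ^ n"
    have L1: "1 \<le> L" using K1 by (simp add: L_def one_le_power)
    have C0: "0 < C0" "C0 \<le> 1" using c0 by (auto simp: C0_def power_le_one)
    have Cc: "C0 \<le> c ^ n" using c0 by (auto simp: C0_def intro: power_mono)
    define \<eta> where "\<eta> = C0^2 / (2 * L)"
    have eta0: "0 < \<eta>" using C0 L1 by (simp add: \<eta>_def)
    have etaC: "\<eta> \<le> C0^2 / 2" using C0 L1 unfolding \<eta>_def by (intro divide_left_mono) auto
    have C02: "C0^2 \<le> C0" using C0 by (simp add: power2_eq_square mult_le_one mult_left_le)
    have eta1: "\<eta> \<le> 1" using etaC C02 C0 by linarith
    have hm: "\<eta> < mn (matw i - matw j)" using hc[OF i j ij] etaC C02 Cc C0 by linarith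
    have ij2: "i @ j \<noteq> j @ i" using ij li lj by (auto simp: append_eq_append_conv)
    have w2: "i @ j \<in> words \<A> (2*n)" "j @ i \<in> words \<A> (2*n)" using li lj by (auto simp: words_def)
    have "c ^ (2*n) < mn (matw (i @ j) - matw (j @ i))" using hc[OF w2 ij2] .
    also have "\<dots> \<le> 2 * mn (matw i) * mn (matw i + matw j)" unfolding matw_append by (rule mn_comm)
    also have "\<dots> \<le> 2 * L * mn (matw i + matw j)"
      using wb(1)[OF li(2)] li mn_nonneg[of "matw i + matw j"] by (intro mult_right_mono) (auto simp: L_def)
    finally have "c ^ (2*n) < 2 * L * mn (matw i + matw j)" .
    moreover have "C0^2 \<le> (c ^ n)^2" using Cc C0 by (intro power_mono) auto
    then have "C0^2 \<le> c ^ (2*n)" by (simp add: power_mult[symmetric] mult.commute)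
    ultimately have "C0^2 < 2 * L * mn (matw i + matw j)" by linarith
    then have hp: "\<eta> < mn (matw i + matw j)" using L1 by (simp add: \<eta>_def pos_divide_less_eq mult.commute)
    have mi: "mn (matw i) \<le> L" using wb(1)[OF li(2)] li by (simp add: L_def)
    have mj: "mn (matw j) \<le> L" using wb(1)[OF lj(2)] lj by (simp add: L_def)
    obtain x where x: "x \<in> J" "\<eta>^2 / (320 * L^4) \<le> \<bar>cr (matw i *v dirvec x) (matw j *v dirvec x)\<bar>"
      using sep_core[OF wb(2)[OF li(2)] wb(2)[OF lj(2)] mi mj L1 eta0 eta1 hm hp]
      unfolding J_def by blast
    moreover have "\<eta>^2 / (320 * L^4) = (c0^n)^4 / (1280 * (K^n)^6)" using L1
      by (simp add: \<eta>_def C0_def L_def power_divide power_mult_distrib field_simps)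
    ultimately show ?thesis by auto
  qed
  have D: "\<bar>cr (matw i *v dirvec x) (matw j *v dirvec x)\<bar> \<le> (K^n)^2 * dP (phiw i x) (phiw j x)"
    if i: "i \<in> words \<A> n" and j: "j \<in> words \<A> n" for n i j x
  proof -
    have li: "length i = n" "set i \<subseteq> \<A>" and lj: "length j = n" "set j \<subseteq> \<A>" using i j by (auto simp: words_def)
    define p where "p = matw i *v dirvec x"
    define q where "q = matw j *v dirvec x"
    have np: "norm p \<le> K^n" using mn_bound[of "matw i" "dirvec x"] wb(1)[OF li(2)] li by (simp add: p_def norm_dirvec)
    have nq: "norm q \<le> K^n" using mn_bound[of "matw j" "dirvec x"] wb(1)[OF lj(2)] lj by (simp add: q_def norm_dirvec)
    have "\<bar>cr p q\<bar> = \<bar>sin (phiw i x - phiw j x)\<bar> * (norm p * norm q)"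
      using key_sin[OF wb(4)[OF li(2)] wb(4)[OF lj(2)], of x] by (simp add: p_def q_def)
    also have "\<dots> \<le> dP (phiw i x) (phiw j x) * (K^n * K^n)"
    proof (rule mult_mono)
      have "\<bar>sin (phiw i x - phiw j x)\<bar> = sin (dP (phiw i x) (phiw j x))" using dP_props by simp
      also have "\<dots> \<le> dP (phiw i x) (phiw j x)" using dP_props(2) by (rule sin_x_le_x)
      finally show "\<bar>sin (phiw i x - phiw j x)\<bar> \<le> dP (phiw i x) (phiw j x)" .
      show "norm p * norm q \<le> K^n * K^n" using np nq K1 by (intro mult_mono) auto
      show "0 \<le> dP (phiw i x) (phiw j x)" by (rule dP_props)
      show "0 \<le> norm p * norm q" by simp
    qed
    finally show ?thesis by (simp add: p_def q_def power2_eq_square mult_ac)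
  qed
  have pos: "0 < (c0^n)^4 / (1280 * (K^n)^6)" for n using c0 K1 by simp
  show ?thesis unfolding strong_exp_sep_def J_def[symmetric]
  proof (intro conjI allI ballI impI)
    fix n i j assume i: "i \<in> words \<A> n" and j: "j \<in> words \<A> n" and eq: "phiw i = phiw j"
    show "i = j"
    proof (rule ccontr)
      assume "i \<noteq> j"
      from C[OF i j this] obtain x where x: "x \<in> J" "(c0^n)^4 / (1280 * (K^n)^6) \<le> \<bar>cr (matw i *v dirvec x) (matw j *v dirvec x)\<bar>" by blast
      have "dP (phiw i x) (phiw j x) = 0" using eq by (simp add: dP_def modpi_def)
      with D[OF i j, of x] x pos[of n] show False by simp
    qed
  next
    show "\<exists>c>0. \<forall>n. \<forall>i\<in>words \<A> n. \<forall>j\<in>words \<A> n. 1 \<le> n \<longrightarrow> hd i \<noteq> hd j \<longrightarrow>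
        c ^ n < (SUP x\<in>J. dP (phiw i x) (phiw j x))"
    proof (intro exI[of _ "c0^4 / (2560 * K^8)"] conjI allI ballI impI)
      show "0 < c0^4 / (2560 * K^8)" using c0 K1 by simp
      fix n i j assume i: "i \<in> words \<A> n" and j: "j \<in> words \<A> n" and n1: "1 \<le> n" and hij: "hd i \<noteq> hd j"
      have "i \<noteq> j" using hij by auto
      from C[OF i j this] obtain x where x: "x \<in> J" "(c0^n)^4 / (1280 * (K^n)^6) \<le> \<bar>cr (matw i *v dirvec x) (matw j *v dirvec x)\<bar>" by blast
      have Ln: "0 < (K^n)^2" using K1 by simp
      have "(c0^n)^4 / (1280 * (K^n)^6) \<le> (K^n)^2 * dP (phiw i x) (phiw j x)" using x D[OF i j, of x] by linarith
      then have d1: "(c0^n)^4 / (1280 * (K^n)^8) \<le> dP (phiw i x) (phiw j x)" using Ln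
        by (simp add: field_simps power_mult_distrib)
      have "(c0^4 / (2560 * K^8))^n = (c0^n)^4 / (2560^n * (K^n)^8)"
        by (simp add: power_divide power_mult_distrib power_mult[symmetric] mult.commute)
      also have "\<dots> < (c0^n)^4 / (1280 * (K^n)^8)"
      proof -
        have "(2560::real) ^ 1 \<le> 2560 ^ n" using n1 by (intro power_increasing) auto
        then have "1280 * (K^n)^8 < 2560^n * (K^n)^8" using K1 by (intro mult_strict_right_mono) auto
        then show ?thesis using c0 K1 by (intro divide_strict_left_mono) auto
      qed
      also have "\<dots> \<le> dP (phiw i x) (phiw j x)" by (rule d1)
      also have "\<dots> \<le> (SUP x\<in>J. dP (phiw i x) (phiw j x))"
        using x(1) by (intro cSUP_upper bdd_above_finite) (auto simp: J_def)
      finally show "(c0^4 / (2560 * K^8))^n < (SUP x\<in>J. dP (phiw i x) (phiw j x))" .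
    qed
  qed
qed


theorem lemma3p6:
  shows "(\<forall>\<A> :: (real ^ 2 ^ 2) set. finite \<A> \<longrightarrow> (\<forall>A\<in>\<A>. invertible A) \<longrightarrow>
           (\<forall>J. J \<noteq> {} \<longrightarrow> J \<subseteq> {0..<pi} \<longrightarrow> strong_exp_sep \<A> J \<longrightarrow> strongly_diophantine \<A>)) \<and>
         (\<forall>\<A> :: (real ^ 2 ^ 2) set. finite \<A> \<longrightarrow> (\<forall>A\<in>\<A>. det A = 1) \<longrightarrow>
           ((\<exists>J. J \<subseteq> {0..<pi} \<and> (\<exists>a b c. a \<in> J \<and> b \<in> J \<and> c \<in> J \<and> a \<noteq> b \<and> a \<noteq> c \<and> b \<noteq> c) \<and> strong_exp_sep \<A> J) \<longleftrightarrow> strongly_diophantine \<A>))"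
proof (intro conjI allI impI)
  fix \<A> :: "(real ^ 2 ^ 2) set" and J :: "real set"
  assume "finite \<A>" "\<forall>A\<in>\<A>. invertible A" "J \<noteq> {}" "strong_exp_sep \<A> J"
  then show "strongly_diophantine \<A>" by (rule part1)
next
  fix \<A> :: "(real ^ 2 ^ 2) set"
  assume fin: "finite \<A>" and d1: "\<forall>A\<in>\<A>. det A = 1"
  have inv: "\<forall>A\<in>\<A>. invertible A" using d1 by (auto simp: invertible_det_nz)
  show "(\<exists>J. J \<subseteq> {0..<pi} \<and> (\<exists>a b c. a \<in> J \<and> b \<in> J \<and> c \<in> J \<and> a \<noteq> b \<and> a \<noteq> c \<and> b \<noteq> c) \<and> strong_exp_sep \<A> J) \<longleftrightarrow> strongly_diophantine \<A>"
  proof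
    assume "\<exists>J. J \<subseteq> {0..<pi} \<and> (\<exists>a b c. a \<in> J \<and> b \<in> J \<and> c \<in> J \<and> a \<noteq> b \<and> a \<noteq> c \<and> b \<noteq> c) \<and> strong_exp_sep \<A> J"
    then obtain J where "J \<noteq> {}" "strong_exp_sep \<A> J" by blast
    then show "strongly_diophantine \<A>" using part1 fin inv by blast
  next
    assume "strongly_diophantine \<A>"
    then have s: "strong_exp_sep \<A> {0, pi/4, pi/2}" using part2 fin d1 by blast
    have sub: "{0, pi/4, pi/2} \<subseteq> {0..<pi}" using pi_gt_zero by auto
    have "0 \<noteq> pi/4" "0 \<noteq> pi/2" "pi/4 \<noteq> pi/2" using pi_gt_zero by auto
    then show "\<exists>J. J \<subseteq> {0..<pi} \<and> (\<exists>a b c. a \<in> J \<and> b \<in> J \<and> c \<in> J \<and> a \<noteq> b \<and> a \<noteq> c \<and> b \<noteq> c) \<and> strong_exp_sep \<A> J"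
      using s sub by blast
  qed
qed

end
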